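(* Let $r\ge 2$ be a constant and $2r\le k\le n$. Consider the (1+1) EA with bit flip probability $1/n$ optimizing $\mathrm{Fork}_{k,r}$ on strings of length $k$, where $\mathrm{Fork}_{k,r}(x)=k+1$ if $x=0^r1^{k-r}$ (valley), $k+2$ if $x=1^{k-r}0^r$ (optimum), and $|x|_1$ otherwise. The probability $p_{ov}$ that the algorithm generates (as an offspring) the optimum or the valley during its way to $1^k$ satisfies $p_{ov}\in O\!\left(\frac{1}{k^{r-1}}\right)$.
   Context: The (1+1) EA with bit flip probability $1/n$: start with $x$ uniform in $\{0,1\}^k$; each iteration create $y$ by flipping each bit of $x$ independently with probability $1/n$ and set $x\gets y$ if $\mathrm{Fork}_{k,r}(y)\ge\mathrm{Fork}_{k,r}(x)$. "During its way to $1^k$" refers to the period before the current solution reaches fitness $k$ (the string $1^k$). *)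

theory Defs
  imports "HOL-Probability.Probability"
begin

text \<open>Bit strings of length k are boolean lists of length k (True = 1).\<close>

definition bitstrings :: "nat \<Rightarrow> bool list set" where
  "bitstrings k = {xs. length xs = k}"

definition ones :: "bool list \<Rightarrow> nat" where
  "ones x = length (filter id x)"

definition valley :: "nat \<Rightarrow> nat \<Rightarrow> bool list" where
  "valley k r = replicate r False @ replicate (k - r) True"

definition optimum :: "nat \<Rightarrow> nat \<Rightarrow> bool list" where
  "optimum k r = replicate (k - r) True @ replicate r False"

definition fork :: "nat \<Rightarrow> nat \<Rightarrow> bool list \<Rightarrow> nat" where
  "fork k r x = (if x = valley k r then k + 1
                 else if x = optimum k r then k + 2
                 else ones x)"

fun mutate :: "real \<Rightarrow> bool list \<Rightarrow> bool list pmf" where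
  "mutate p [] = return_pmf []"
| "mutate p (b # bs) =
     bind_pmf (bernoulli_pmf p) (\<lambda>f.
     bind_pmf (mutate p bs) (\<lambda>ys.
     return_pmf ((if f then \<not> b else b) # ys)))"

text \<open>Probability that, starting from current search point x and within at most T
  iterations of the (1+1) EA (mutation rate 1/n) on Fork_{k,r}, an offspring equal to
  the optimum or the valley is generated before the current search point is 1^k.\<close>
fun pov_within :: "nat \<Rightarrow> nat \<Rightarrow> nat \<Rightarrow> nat \<Rightarrow> bool list \<Rightarrow> real" where
  "pov_within k r n 0 x = 0"
| "pov_within k r n (Suc T) x =
     (if x = replicate k True then 0
      else measure_pmf.expectation (mutate (1 / real n) x)
             (\<lambda>y. if y = optimum k r \<or> y = valley k r then 1
                  else pov_within k r n T (if fork k r y \<ge> fork k r x then y else x)))"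

text \<open>The finite-horizon probabilities are nondecreasing in T; p_ov is their supremum.\<close>
definition p_ov :: "nat \<Rightarrow> nat \<Rightarrow> nat \<Rightarrow> real" where
  "p_ov k r n = (SUP T. measure_pmf.expectation (pmf_of_set (bitstrings k)) (pov_within k r n T))"

end

theory Submission
  imports Defs "HOL-Combinatorics.Permutations"
begin


definition wt :: "real \<Rightarrow> bool \<Rightarrow> bool \<Rightarrow> real" where
  "wt p a b = (if a = b then 1 - p else p)"

lemma pmf_mutate:
  assumes "0 \<le> p" "p \<le> 1"
  shows "pmf (mutate p x) y = (if length y = length x then (\<Prod>i<length x. wt p (x!i) (y!i)) else 0)"
proof (induction x arbitrary: y)
  case Nil
  then show ?case by (auto simp: pmf_return)
next
  case (Cons b bs)
  have inj: "inj (Cons c)" for c :: bool by (auto simp: inj_def)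
  have m: "bind_pmf (mutate p bs) (\<lambda>ys. return_pmf (c # ys)) = map_pmf (Cons c) (mutate p bs)" for c
    by (simp add: map_pmf_def)
  show ?case
  proof (cases y)
    case Nil
    have "pmf (map_pmf (Cons c) (mutate p bs)) [] = 0" for c
      by (rule pmf_map_outside) auto
    then show ?thesis using Nil assms by (simp add: pmf_bind m)
  next
    case (Cons c ys)
    have e: "pmf (map_pmf (Cons d) (mutate p bs)) (c # ys) = (if d = c then pmf (mutate p bs) ys else 0)" for d
    proof (cases "d = c")
      case True then show ?thesis using pmf_map_inj'[OF inj] by simp
    next
      case False then show ?thesis by (subst pmf_map_outside) auto
    qed
    have sh: "(\<Prod>i<Suc (length bs). wt p ((b#bs)!i) ((c#ys)!i)) = wt p b c * (\<Prod>i<length bs. wt p (bs!i) (ys!i))"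
      by (subst prod.lessThan_Suc_shift) simp
    have "pmf (mutate p (b#bs)) (c#ys) = measure_pmf.expectation (bernoulli_pmf p)
            (\<lambda>f. pmf (map_pmf (Cons (if f then \<not> b else b)) (mutate p bs)) (c#ys))"
      by (simp only: mutate.simps m pmf_bind)
    also have "\<dots> = wt p b c * pmf (mutate p bs) ys"
      using assms by (simp only: integral_bernoulli_pmf e) (auto simp: wt_def)
    finally show ?thesis using Cons sh Cons.IH by simp
  qed
qed



abbreviation pp :: "nat \<Rightarrow> real" where "pp n \<equiv> 1 / real n"

lemma pp_bounds: "0 \<le> pp n" "pp n \<le> 1"
  by (cases n; simp)+

lemma finite_bs: "finite (bitstrings k)"
proof -
  have "bitstrings k = {xs. set xs \<subseteq> UNIV \<and> length xs = k}" by (auto simp: bitstrings_def)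
  then show ?thesis using finite_lists_length_eq[of "UNIV :: bool set" k] by simp
qed

lemma card_bs: "card (bitstrings k) = 2 ^ k"
proof -
  have "bitstrings k = {xs. set xs \<subseteq> UNIV \<and> length xs = k}" by (auto simp: bitstrings_def)
  then show ?thesis using card_lists_length_eq[of "UNIV :: bool set" k] by (simp add: card_UNIV_bool)
qed

lemma pmf_mut: "pmf (mutate (pp n) x) y = (if length y = length x then (\<Prod>i<length x. wt (pp n) (x!i) (y!i)) else 0)"
  using pmf_mutate[OF pp_bounds] .

lemma set_mut: "y \<in> set_pmf (mutate (pp n) x) \<Longrightarrow> length y = length x"
  by (auto simp: set_pmf_iff pmf_mut split: if_splits)

lemma Emut: fixes f :: "bool list \<Rightarrow> real" shows "measure_pmf.expectation (mutate (pp n) x) f =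
    (\<Sum>y\<in>bitstrings (length x). pmf (mutate (pp n) x) y * f y)"
  by (subst integral_measure_pmf[of "bitstrings (length x)"])
     (auto simp: finite_bs[unfolded bitstrings_def] bitstrings_def dest: set_mut)

lemma sum_pmf1: "(\<Sum>y\<in>bitstrings (length x). pmf (mutate (pp n) x) y) = 1"
  using Emut[of n x "\<lambda>_. 1"] by simp

lemma Emono: fixes f g :: "bool list \<Rightarrow> real" shows "(\<And>y. length y = length x \<Longrightarrow> f y \<le> g y) \<Longrightarrow>
   measure_pmf.expectation (mutate (pp n) x) f \<le> measure_pmf.expectation (mutate (pp n) x) g"
  unfolding Emut by (rule sum_mono) (auto intro!: mult_left_mono simp: bitstrings_def)

lemma Eadd: fixes f g :: "bool list \<Rightarrow> real" shows "measure_pmf.expectation (mutate (pp n) x) (\<lambda>y. f y + g y) =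
   measure_pmf.expectation (mutate (pp n) x) f + measure_pmf.expectation (mutate (pp n) x) g"
  unfolding Emut by (simp add: distrib_left sum.distrib)

lemma Econst: fixes c :: real shows "measure_pmf.expectation (mutate (pp n) x) (\<lambda>y. c) = c"
  by simp

lemma Ele: fixes f g :: "bool list \<Rightarrow> real" shows "(\<And>y. length y = length x \<Longrightarrow> f y \<le> c) \<Longrightarrow>
   measure_pmf.expectation (mutate (pp n) x) f \<le> c"
  using Emono[of x f "\<lambda>_. c" n] by simp

lemma pmf_self: "pmf (mutate (pp n) x) x = (1 - pp n) ^ length x"
  by (simp add: pmf_mut wt_def)

lemma pmf_flip:
  assumes "i < length x"
  shows "pmf (mutate (pp n) x) (x[i := \<not> x!i]) = pp n * (1 - pp n) ^ (length x - 1)"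
proof -
  have "(\<Prod>j<length x. wt (pp n) (x!j) (x[i := \<not> x!i] ! j)) = (\<Prod>j<length x. if j = i then pp n else 1 - pp n)"
    by (rule prod.cong) (auto simp: wt_def nth_list_update)
  also have "\<dots> = pp n * (\<Prod>j\<in>{..<length x} - {i}. 1 - pp n)"
    using assms by (subst prod.remove[of _ i]) auto
  also have "\<dots> = pp n * (1 - pp n) ^ (length x - 1)"
    using assms by simp
  finally show ?thesis by (simp add: pmf_mut)
qed

definition nxt :: "bool list \<Rightarrow> bool list \<Rightarrow> bool list" where
  "nxt x y = (if ones x \<le> ones y then y else x)"

fun hit :: "nat \<Rightarrow> nat \<Rightarrow> bool list \<Rightarrow> nat \<Rightarrow> bool list \<Rightarrow> real" where
  "hit k n z 0 x = 0"
| "hit k n z (Suc T) x = (if x = replicate k True then 0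
     else measure_pmf.expectation (mutate (pp n) x)
       (\<lambda>y. if y = z then 1 else hit k n z T (nxt x y)))"

fun cnt :: "nat \<Rightarrow> nat \<Rightarrow> nat \<Rightarrow> nat \<Rightarrow> bool list \<Rightarrow> real" where
  "cnt k r n 0 x = 0"
| "cnt k r n (Suc T) x = (if x = replicate k True then 0
     else measure_pmf.expectation (mutate (pp n) x)
       (\<lambda>y. (if ones y = k - r \<and> y \<noteq> x then 1 else 0) + cnt k r n T (nxt x y)))"

lemma hit_nonneg: "0 \<le> hit k n z T x"
  by (induction T arbitrary: x) (auto intro!: integral_nonneg)

lemma cnt_nonneg: "0 \<le> cnt k r n T x"
  by (induction T arbitrary: x) (auto intro!: integral_nonneg add_nonneg_nonneg)

lemma len_nxt: "length x = k \<Longrightarrow> length y = k \<Longrightarrow> length (nxt x y) = k"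
  by (simp add: nxt_def)

lemma pov_le1: "pov_within k r n T x \<le> 1"
  by (induction T arbitrary: x) (auto intro!: Ele)

lemma povA:
  assumes "length x = k" "x \<noteq> optimum k r" "x \<noteq> valley k r"
  shows "pov_within k r n T x \<le> hit k n (optimum k r) T x + hit k n (valley k r) T x"
  using assms
proof (induction T arbitrary: x)
  case 0 then show ?case by simp
next
  case (Suc T)
  show ?case
  proof (cases "x = replicate k True")
    case True then show ?thesis by simp
  next
    case False
    have "pov_within k r n (Suc T) x \<le> measure_pmf.expectation (mutate (pp n) x)
       (\<lambda>y. (if y = optimum k r then 1 else hit k n (optimum k r) T (nxt x y)) +
            (if y = valley k r then 1 else hit k n (valley k r) T (nxt x y)))"
      using False
    proof (simp only: pov_within.simps if_False, intro Emono)
      fix y :: "bool list" assume ly: "length y = length x"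
      show "(if y = optimum k r \<or> y = valley k r then 1
            else pov_within k r n T (if fork k r x \<le> fork k r y then y else x)) \<le>
          (if y = optimum k r then 1 else hit k n (optimum k r) T (nxt x y)) +
          (if y = valley k r then 1 else hit k n (valley k r) T (nxt x y))"
      proof (cases "y = optimum k r \<or> y = valley k r")
        case True then show ?thesis using hit_nonneg[of k n] by auto
      next
        case yn: False
        have fe: "(if fork k r x \<le> fork k r y then y else x) = nxt x y"
          using yn Suc.prems by (simp add: fork_def nxt_def)
        have "pov_within k r n T (nxt x y) \<le> hit k n (optimum k r) T (nxt x y) + hit k n (valley k r) T (nxt x y)"
          apply (rule Suc.IH)
          using yn Suc.prems ly by (auto simp: nxt_def)
        then show ?thesis using yn fe by simp
      qed
    qed
    then show ?thesis using False by (simp add: Eadd)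
  qed
qed



lemma ones_mset: "ones x = count (mset x) True"
  by (induction x) (auto simp: ones_def)

lemma ones_le: "ones x \<le> length x"
  by (simp add: ones_def)

lemma ones_perm: "\<pi> permutes {..<length x} \<Longrightarrow> ones (permute_list \<pi> x) = ones x"
  by (simp add: ones_mset)

lemma perm_repl: "\<pi> permutes {..<k} \<Longrightarrow> permute_list \<pi> (replicate k a) = replicate k a"
proof (rule nth_equalityI)
  fix i assume "\<pi> permutes {..<k}" "i < length (permute_list \<pi> (replicate k a))"
  moreover have "\<pi> i < k" using calculation permutes_in_image[of \<pi> "{..<k}" i] by simp
  ultimately show "permute_list \<pi> (replicate k a) ! i = replicate k a ! i"
    by (simp add: permute_list_nth)
qed simp

lemma perm_inv:
  assumes "\<pi> permutes {..<length x}"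
  shows "permute_list (inv \<pi>) (permute_list \<pi> x) = x"
proof -
  have "permute_list (inv \<pi>) (permute_list \<pi> x) = permute_list (\<pi> \<circ> inv \<pi>) x"
    by (rule permute_list_compose[OF permutes_inv[OF assms], symmetric])
  also have "\<pi> \<circ> inv \<pi> = id" using permutes_inv_o(1)[OF assms] .
  finally show ?thesis by simp
qed

lemma perm_bij:
  assumes "\<pi> permutes {..<k}"
  shows "bij_betw (permute_list \<pi>) (bitstrings k) (bitstrings k)"
proof (rule bij_betw_byWitness[where f'="permute_list (inv \<pi>)"])
  show "\<forall>a\<in>bitstrings k. permute_list (inv \<pi>) (permute_list \<pi> a) = a"
    using assms perm_inv by (auto simp: bitstrings_def)
  show "\<forall>a'\<in>bitstrings k. permute_list \<pi> (permute_list (inv \<pi>) a') = a'"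
    using assms perm_inv[of "inv \<pi>"] permutes_inv[OF assms] inv_inv_eq[OF permutes_bij[OF assms]]
    by (auto simp: bitstrings_def)
qed (auto simp: bitstrings_def)

lemma perm_inj: fixes a b :: "bool list" shows "\<pi> permutes {..<k} \<Longrightarrow> length a = k \<Longrightarrow> length b = k \<Longrightarrow>
   permute_list \<pi> a = permute_list \<pi> b \<longleftrightarrow> a = b"
  using inj_onD[OF bij_betw_imp_inj_on[OF perm_bij, of \<pi> k], of a b] by (auto simp: bitstrings_def)

lemma pmf_perm:
  assumes "\<pi> permutes {..<length x}" "length y = length x"
  shows "pmf (mutate (pp n) (permute_list \<pi> x)) (permute_list \<pi> y) = pmf (mutate (pp n) x) y"
proof -
  have "(\<Prod>i<length x. wt (pp n) (permute_list \<pi> x ! i) (permute_list \<pi> y ! i))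
      = (\<Prod>i<length x. (\<lambda>i. wt (pp n) (x ! i) (y ! i)) (\<pi> i))"
    using assms by (intro prod.cong) (auto simp: permute_list_nth)
  also have "\<dots> = (\<Prod>i<length x. wt (pp n) (x ! i) (y ! i))"
    using prod.permute[OF assms(1), of "\<lambda>i. wt (pp n) (x ! i) (y ! i)"] by (simp add: comp_def)
  finally show ?thesis using assms by (simp add: pmf_mut)
qed

lemma E_perm:
  fixes F :: "bool list \<Rightarrow> real"
  assumes "\<pi> permutes {..<length x}"
  shows "measure_pmf.expectation (mutate (pp n) (permute_list \<pi> x)) F =
         measure_pmf.expectation (mutate (pp n) x) (\<lambda>w. F (permute_list \<pi> w))"
proof -
  have "measure_pmf.expectation (mutate (pp n) (permute_list \<pi> x)) F =
    (\<Sum>y\<in>bitstrings (length x). pmf (mutate (pp n) (permute_list \<pi> x)) y * F y)"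
    by (simp add: Emut)
  also have "\<dots> = (\<Sum>w\<in>bitstrings (length x). pmf (mutate (pp n) (permute_list \<pi> x)) (permute_list \<pi> w) * F (permute_list \<pi> w))"
    using sum.reindex_bij_betw[OF perm_bij[OF assms], of "\<lambda>y. pmf (mutate (pp n) (permute_list \<pi> x)) y * F y"]
    by simp
  also have "\<dots> = (\<Sum>w\<in>bitstrings (length x). pmf (mutate (pp n) x) w * F (permute_list \<pi> w))"
    using assms by (intro sum.cong) (auto simp: pmf_perm bitstrings_def)
  finally show ?thesis by (simp add: Emut)
qed

lemma nxt_perm: "\<pi> permutes {..<k} \<Longrightarrow> length x = k \<Longrightarrow> length y = k \<Longrightarrow>
  nxt (permute_list \<pi> x) (permute_list \<pi> y) = permute_list \<pi> (nxt x y)"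
  by (simp add: nxt_def ones_perm)

lemma hit_perm:
  assumes "\<pi> permutes {..<k}" "length z = k" "length x = k"
  shows "hit k n (permute_list \<pi> z) T (permute_list \<pi> x) = hit k n z T x"
  using assms(3)
proof (induction T arbitrary: x)
  case 0 then show ?case by simp
next
  case (Suc T)
  have eq1: "permute_list \<pi> x = replicate k True \<longleftrightarrow> x = replicate k True"
    using perm_inj[OF assms(1), of x "replicate k True"] perm_repl[OF assms(1), of True] Suc.prems by simp
  have "measure_pmf.expectation (mutate (pp n) (permute_list \<pi> x))
       (\<lambda>y. if y = permute_list \<pi> z then 1 else hit k n (permute_list \<pi> z) T (nxt (permute_list \<pi> x) y))
     = measure_pmf.expectation (mutate (pp n) x)
       (\<lambda>w. if permute_list \<pi> w = permute_list \<pi> z then 1 else hit k n (permute_list \<pi> z) T (nxt (permute_list \<pi> x) (permute_list \<pi> w)))"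
    using E_perm assms Suc.prems by simp
  also have "\<dots> = measure_pmf.expectation (mutate (pp n) x)
       (\<lambda>y. if y = z then 1 else hit k n z T (nxt x y))"
    unfolding Emut
    apply (intro sum.cong refl)
    using assms Suc.prems
    by (auto simp: bitstrings_def perm_inj nxt_perm Suc.IH len_nxt)
  finally show ?case using eq1 by simp
qed



definition Lset :: "nat \<Rightarrow> nat \<Rightarrow> bool list set" where
  "Lset k r = {z \<in> bitstrings k. ones z = k - r}"

lemma finite_L: "finite (Lset k r)"
  using finite_bs[of k] by (simp add: Lset_def)

lemma sum_split_if:
  fixes h :: "bool list \<Rightarrow> real"
  assumes "finite A"
  shows "(\<Sum>z\<in>A. if y = z then 1 else h z) = (if y \<in> A then 1 else 0) + (\<Sum>z\<in>A - {y}. h z)"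
proof (cases "y \<in> A")
  case True
  then have "(\<Sum>z\<in>A. if y = z then 1 else h z) = 1 + (\<Sum>z\<in>A - {y}. if y = z then 1 else h z)"
    using assms by (subst sum.remove[of _ y]) auto
  also have "(\<Sum>z\<in>A - {y}. if y = z then 1 else h z) = (\<Sum>z\<in>A - {y}. h z)"
    by (rule sum.cong) auto
  finally show ?thesis using True by simp
next
  case False
  then show ?thesis by (auto intro!: sum.cong)
qed

lemma hit_cnt:
  assumes "length x = k"
  shows "(\<Sum>z\<in>Lset k r - {x}. hit k n z T x) \<le> cnt k r n T x"
  using assms
proof (induction T arbitrary: x)
  case 0 then show ?case by simp
next
  case (Suc T)
  show ?case
  proof (cases "x = replicate k True")
    case True then show ?thesis by simp
  next
    case False
    let ?B = "bitstrings (length x)"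
    let ?p = "pmf (mutate (pp n) x)"
    have "(\<Sum>z\<in>Lset k r - {x}. hit k n z (Suc T) x) =
       (\<Sum>z\<in>Lset k r - {x}. \<Sum>y\<in>?B. ?p y * (if y = z then 1 else hit k n z T (nxt x y)))"
      using False by (simp add: Emut)
    also have "\<dots> = (\<Sum>y\<in>?B. ?p y * (\<Sum>z\<in>Lset k r - {x}. (if y = z then 1 else hit k n z T (nxt x y))))"
      by (subst sum.swap) (simp add: sum_distrib_left)
    also have "\<dots> \<le> (\<Sum>y\<in>?B. ?p y * ((if ones y = k - r \<and> y \<noteq> x then 1 else 0) + cnt k r n T (nxt x y)))"
    proof (rule sum_mono, rule mult_left_mono)
      fix y assume y: "y \<in> ?B"
      define w where "w = nxt x y"
      have lw: "length w = k" using y Suc.prems by (simp add: w_def nxt_def bitstrings_def)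
      have "(\<Sum>z\<in>Lset k r - {x}. (if y = z then 1 else hit k n z T w)) =
          (if y \<in> Lset k r - {x} then 1 else 0) + (\<Sum>z\<in>Lset k r - {x} - {y}. hit k n z T w)"
        by (rule sum_split_if) (simp add: finite_L)
      also have "(\<Sum>z\<in>Lset k r - {x} - {y}. hit k n z T w) \<le> (\<Sum>z\<in>Lset k r - {w}. hit k n z T w)"
        by (rule sum_mono2) (auto simp: finite_L hit_nonneg w_def nxt_def)
      also have "\<dots> \<le> cnt k r n T w" using Suc.IH lw by simp
      finally have *: "(\<Sum>z\<in>Lset k r - {x}. (if y = z then 1 else hit k n z T w)) \<le>
          (if y \<in> Lset k r - {x} then 1 else 0) + cnt k r n T w" by simp
      show "(\<Sum>z\<in>Lset k r - {x}. (if y = z then 1 else hit k n z T (nxt x y))) \<le>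
          (if ones y = k - r \<and> y \<noteq> x then 1 else 0) + cnt k r n T (nxt x y)"
        using * y Suc.prems unfolding w_def by (auto simp: Lset_def bitstrings_def)
    qed simp
    also have "\<dots> = cnt k r n (Suc T) x"
      using False by (simp add: Emut)
    finally show ?thesis .
  qed
qed



definition gp :: "nat \<Rightarrow> nat \<Rightarrow> nat \<Rightarrow> real" where
  "gp k r j = (if j < k - r then 1 + 3 * real k * real r else 3 * k * (real k - real j))"

lemma exp_bound:
  assumes "2 \<le> n"
  shows "(1 - 1 / real n) ^ (n - 1) \<ge> 1 / 3"
proof -
  define m where "m = n - 1"
  have m1: "1 \<le> m" "n = m + 1" using assms by (auto simp: m_def)
  have "(1 + 1 / real m) ^ m \<le> exp (1 / real m) ^ m"
    by (rule power_mono) (auto simp: exp_ge_add_one_self)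
  also have "\<dots> = exp (real m * (1 / real m))" by (rule exp_of_nat_mult[symmetric])
  also have "\<dots> = exp 1" using m1 by simp
  also have "\<dots> \<le> 3" by (rule exp_le)
  finally have h: "(1 + 1 / real m) ^ m \<le> 3" .
  have eq: "1 - 1 / real n = 1 / (1 + 1 / real m)"
    using m1 by (simp add: field_simps)
  have pos: "0 < (1 + 1 / real m) ^ m" using m1 by (intro zero_less_power) (auto intro: add_pos_nonneg)
  have "(1 - 1 / real n) ^ (n - 1) = 1 / (1 + 1 / real m) ^ m"
    unfolding eq m_def by (simp add: power_one_over)
  also have "\<dots> \<ge> 1 / 3" using h pos by (simp add: field_simps)
  finally show ?thesis by simp
qed

lemma exists_false:
  assumes "x \<noteq> replicate (length x) True"
  obtains i where "i < length x" "\<not> x ! i"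
proof -
  have "\<not> (\<forall>y\<in>set x. y = True)"
    using assms replicate_length_same[of x True] by auto
  then obtain y where "y \<in> set x" "\<not> y" by auto
  then show ?thesis using that by (auto simp: in_set_conv_nth)
qed

lemma ones_lt:
  assumes "x \<noteq> replicate (length x) True"
  shows "ones x < length x"
proof -
  obtain i where "i < length x" "\<not> x ! i" using exists_false[OF assms] by blast
  then show ?thesis unfolding ones_def using nth_mem[of i x] by (intro length_filter_less[of "x ! i"]) auto
qed

lemma ones_flip:
  assumes "i < length x" "\<not> x ! i"
  shows "ones (x[i := \<not> x ! i]) = ones x + 1"
  using assms by (simp add: ones_mset mset_update)

lemma P1:
  assumes "length x = k" "1 \<le> n"
  shows "measure_pmf.expectation (mutate (pp n) x) (\<lambda>y. if y \<noteq> x then 1 else 0) \<le> real k / real n"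
proof -
  let ?B = "bitstrings (length x)"
  let ?p = "pmf (mutate (pp n) x)"
  have "measure_pmf.expectation (mutate (pp n) x) (\<lambda>y. if y \<noteq> x then 1 else 0)
      = (\<Sum>y\<in>?B. ?p y - (if y = x then ?p y else 0))"
    by (simp add: Emut) (rule sum.cong; auto)
  also have "\<dots> = 1 - ?p x"
  proof -
    have mem: "x \<in> ?B" by (simp add: bitstrings_def)
    show ?thesis using sum_pmf1[of n x] finite_bs[of "length x"] mem
      by (simp only: sum_subtractf sum.delta') simp
  qed
  also have "?p x = (1 - pp n) ^ k" using assms by (simp add: pmf_self)
  finally have e: "measure_pmf.expectation (mutate (pp n) x) (\<lambda>y. if y \<noteq> x then 1 else 0) = 1 - (1 - pp n) ^ k" .
  have "(1 - pp n) ^ k \<ge> 1 - real k * pp n"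
    using Bernoulli_inequality[of "- pp n" k] pp_bounds[of n] by simp
  then show ?thesis using e by simp
qed

lemma P2:
  assumes "length x = k" "2 \<le> k" "k \<le> n" "x \<noteq> replicate k True"
  shows "measure_pmf.expectation (mutate (pp n) x) (\<lambda>y. if ones x < ones y then 1 else 0) \<ge> 1 / (3 * real n)"
proof -
  obtain i where i: "i < length x" "\<not> x ! i" using exists_false assms by metis
  define y0 where "y0 = x[i := \<not> x ! i]"
  have y0B: "y0 \<in> bitstrings (length x)" by (simp add: y0_def bitstrings_def)
  have "1 / (3 * real n) \<le> pp n * (1 - pp n) ^ (length x - 1)"
  proof -
    have "(1 - pp n) ^ (n - 1) \<le> (1 - pp n) ^ (length x - 1)"
      using assms pp_bounds[of n] by (intro power_decreasing) auto
    moreover have "1/3 \<le> (1 - pp n) ^ (n - 1)" using exp_bound[of n] assms by simp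
    ultimately have "1/3 \<le> (1 - pp n) ^ (length x - 1)" by linarith
    then have "pp n * (1/3) \<le> pp n * (1 - pp n) ^ (length x - 1)"
      using pp_bounds[of n] by (intro mult_left_mono) auto
    then show ?thesis by simp
  qed
  also have "\<dots> = pmf (mutate (pp n) x) y0 * (if ones x < ones y0 then 1 else 0)"
  proof -
    have pf: "pmf (mutate (pp n) x) y0 = pp n * (1 - pp n) ^ (length x - 1)"
      unfolding y0_def by (rule pmf_flip[OF i(1)])
    have "ones y0 = ones x + 1" unfolding y0_def by (rule ones_flip[OF i])
    then show ?thesis using pf by simp
  qed
  also have "\<dots> \<le> (\<Sum>y\<in>bitstrings (length x). pmf (mutate (pp n) x) y * (if ones x < ones y then 1 else 0))"
    by (rule member_le_sum[OF y0B]) (auto simp: finite_bs)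
  finally show ?thesis by (simp add: Emut)
qed

lemma Elin:
  fixes f g :: "bool list \<Rightarrow> real"
  shows "measure_pmf.expectation (mutate (pp n) x) (\<lambda>y. f y + (c - d * g y)) =
    measure_pmf.expectation (mutate (pp n) x) f + c - d * measure_pmf.expectation (mutate (pp n) x) g"
proof -
  let ?B = "bitstrings (length x)"
  let ?p = "pmf (mutate (pp n) x)"
  have "(\<Sum>y\<in>?B. ?p y * (f y + (c - d * g y))) = (\<Sum>y\<in>?B. ?p y * f y + c * ?p y - d * (?p y * g y))"
    by (rule sum.cong) (auto simp: algebra_simps)
  also have "\<dots> = (\<Sum>y\<in>?B. ?p y * f y) + c * (\<Sum>y\<in>?B. ?p y) - d * (\<Sum>y\<in>?B. ?p y * g y)"
    by (simp add: sum.distrib sum_subtractf sum_distrib_left)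
  finally show ?thesis by (simp add: Emut sum_pmf1)
qed

lemma gp_le: "r \<le> k \<Longrightarrow> gp k r j \<le> 1 + 3 * real k * real r"
proof -
  assume "r \<le> k"
  show ?thesis
  proof (cases "j < k - r")
    case False
    then have "real k - real j \<le> real r" by linarith
    then have "3 * real k * (real k - real j) \<le> 3 * real k * real r" by (rule mult_left_mono) auto
    moreover have "gp k r j = 3 * real k * (real k - real j)" using False by (simp add: gp_def)
    ultimately show ?thesis by linarith
  qed (simp add: gp_def)
qed

lemma cnt_bound:
  assumes "2 \<le> k" "k \<le> n" "r \<le> k" "length x = k"
  shows "cnt k r n T x \<le> gp k r (ones x)"
  using assms(4)
proof (induction T arbitrary: x)
  case 0
  have "0 \<le> gp k r (ones x)" using ones_le[of x] 0 by (auto simp: gp_def)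
  then show ?case by simp
next
  case (Suc T)
  show ?case
  proof (cases "x = replicate k True")
    case True
    then show ?thesis by (simp add: gp_def ones_def)
  next
    case False
    define j where "j = ones x"
    have jk: "j < k" using ones_lt[of x] False Suc.prems by (simp add: j_def)
    have IH: "cnt k r n T (nxt x y) \<le> gp k r (ones (nxt x y))" if "length y = length x" for y
      using Suc.IH[of "nxt x y"] that Suc.prems by (simp add: len_nxt)
    show ?thesis
    proof (cases "j < k - r")
      case True
      have "cnt k r n (Suc T) x \<le> 1 + 3 * real k * real r"
        using False
      proof (simp only: cnt.simps if_False, intro Ele)
        fix y :: "bool list" assume ly: "length y = length x"
        show "(if ones y = k - r \<and> y \<noteq> x then 1 else 0) + cnt k r n T (nxt x y) \<le> 1 + 3 * real k * real r"
        proof (cases "ones y = k - r \<and> y \<noteq> x")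
          case True
          then have "nxt x y = y" using \<open>j < k - r\<close> by (simp add: nxt_def j_def)
          then have "cnt k r n T (nxt x y) \<le> 3 * real k * real r"
            using IH[OF ly] True assms(3) by (simp add: gp_def)
          then show ?thesis using True by simp
        next
          case False
          then have "(if ones y = k - r \<and> y \<noteq> x then 1 else 0) = (0::real)" by simp
          then show ?thesis using IH[OF ly] gp_le[OF assms(3), of "ones (nxt x y)"] by linarith
        qed
      qed
      then show ?thesis using True by (simp add: gp_def j_def)
    next
      case jr: False
      let ?E = "measure_pmf.expectation (mutate (pp n) x)"
      have "cnt k r n (Suc T) x \<le> ?E (\<lambda>y. (if y \<noteq> x then 1 else 0) + (3 * real k * (real k - real j) - 3 * real k * (if ones x < ones y then 1 else (0::real))))"
        using False
      proof (simp only: cnt.simps if_False, intro Emono)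
        fix y :: "bool list" assume ly: "length y = length x"
        have g: "gp k r (ones (nxt x y)) = 3 * k * (real k - real (ones (nxt x y)))"
          using jr by (auto simp: gp_def nxt_def j_def)
        have "real k - real (ones (nxt x y)) \<le> real k - real j - (if ones x < ones y then 1 else 0)"
          by (auto simp: nxt_def j_def)
        then have "3 * k * (real k - real (ones (nxt x y))) \<le> 3 * k * (real k - real j - (if ones x < ones y then 1 else 0))"
          by (intro mult_left_mono) auto
        then show "(if ones y = k - r \<and> y \<noteq> x then 1 else 0) + cnt k r n T (nxt x y) \<le>
            (if y \<noteq> x then 1 else 0) + (3 * real k * (real k - real j) - 3 * real k * (if ones x < ones y then 1 else (0::real)))"
          using IH[OF ly] g by (auto simp: algebra_simps)
      qed
      also have "\<dots> = ?E (\<lambda>y. if y \<noteq> x then 1 else 0) + 3 * real k * (real k - real j)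
           - 3 * real k * ?E (\<lambda>y. if ones x < ones y then 1 else 0)"
        by (rule Elin)
      also have "\<dots> \<le> real k / real n + 3 * k * (real k - real j) - 3 * k * (1 / (3 * real n))"
      proof -
        have a: "?E (\<lambda>y. if y \<noteq> x then 1 else 0) \<le> real k / real n"
          using P1[OF Suc.prems] assms by simp
        have "1 / (3 * real n) \<le> ?E (\<lambda>y. if ones x < ones y then 1 else 0)"
          using P2[OF Suc.prems assms(1,2) False] .
        then have b: "3 * real k * (1 / (3 * real n)) \<le> 3 * real k * ?E (\<lambda>y. if ones x < ones y then 1 else 0)"
          by (rule mult_left_mono) simp
        show ?thesis using a b by linarith
      qed
      also have "\<dots> = 3 * k * (real k - real j)" using assms by simp
      finally show ?thesis using jr by (simp add: gp_def j_def)
    qed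
  qed
qed



lemma count_false: "count (mset a) False + ones a = length a"
  by (induction a) (auto simp: ones_def)

lemma mset_bool:
  assumes "length a = length b" "ones a = ones b"
  shows "mset a = mset b"
proof (rule multiset_eqI)
  fix c :: bool
  show "count (mset a) c = count (mset b) c"
  proof (cases c)
    case True then show ?thesis using assms by (simp add: ones_mset)
  next
    case False then show ?thesis using assms count_false[of a] count_false[of b] by simp
  qed
qed

lemma sum_ne:
  fixes f :: "bool list \<Rightarrow> real"
  assumes "finite A"
  shows "(\<Sum>z\<in>A. if x \<noteq> z then f z else 0) = (\<Sum>z\<in>A - {x}. f z)"
proof (cases "x \<in> A")
  case True
  then have "(\<Sum>z\<in>A. if x \<noteq> z then f z else 0) = 0 + (\<Sum>z\<in>A - {x}. if x \<noteq> z then f z else 0)"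
    using assms by (subst sum.remove[of _ x]) auto
  also have "\<dots> = (\<Sum>z\<in>A - {x}. f z)" unfolding add_0 by (rule sum.cong) auto
  finally show ?thesis .
next
  case False then show ?thesis by (auto intro!: sum.cong)
qed

definition SS :: "nat \<Rightarrow> nat \<Rightarrow> nat \<Rightarrow> bool list \<Rightarrow> real" where
  "SS k n T z = (\<Sum>x\<in>bitstrings k. if x \<noteq> z then hit k n z T x else 0)"

lemma SS_sym:
  assumes "z \<in> Lset k r" "zo \<in> Lset k r"
  shows "SS k n T z = SS k n T zo"
proof -
  have lo: "length zo = k" "length z = k" using assms by (auto simp: Lset_def bitstrings_def)
  have "mset z = mset zo" using assms by (intro mset_bool) (auto simp: Lset_def bitstrings_def)
  then obtain \<pi> where pi: "\<pi> permutes {..<length zo}" "permute_list \<pi> zo = z"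
    by (rule mset_eq_permutation)
  then have pk: "\<pi> permutes {..<k}" using lo by simp
  have "SS k n T z = (\<Sum>x\<in>bitstrings k. if x \<noteq> permute_list \<pi> zo then hit k n (permute_list \<pi> zo) T x else 0)"
    by (simp only: SS_def pi(2))
  also have "\<dots> = (\<Sum>w\<in>bitstrings k. if permute_list \<pi> w \<noteq> permute_list \<pi> zo then hit k n (permute_list \<pi> zo) T (permute_list \<pi> w) else 0)"
    using sum.reindex_bij_betw[OF perm_bij[OF pk], of "\<lambda>x. if x \<noteq> permute_list \<pi> zo then hit k n (permute_list \<pi> zo) T x else 0"]
    by simp
  also have "\<dots> = SS k n T zo"
    unfolding SS_def using pk lo
    by (intro sum.cong refl) (auto simp: bitstrings_def perm_inj hit_perm)
  finally show ?thesis .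
qed

lemma card_L:
  assumes "r \<le> k"
  shows "k choose r \<le> card (Lset k r)"
proof -
  define f where "f S = map (\<lambda>i. i \<in> S) [0..<k]" for S :: "nat set"
  let ?A = "{S. S \<subseteq> {..<k} \<and> card S = k - r}"
  have "card ?A = k choose (k - r)" using n_subsets[of "{..<k}" "k - r"] by simp
  also have "\<dots> = k choose r" using binomial_symmetric[OF assms] by simp
  finally have cA: "card ?A = k choose r" .
  have inj: "inj_on f ?A"
  proof (rule inj_onI)
    fix S S' assume "S \<in> ?A" "S' \<in> ?A" "f S = f S'"
    have fn: "f X ! i = (i \<in> X)" if "i < k" for X i using that by (simp add: f_def)
    have eqi: "(i \<in> S) = (i \<in> S')" if "i < k" for i
      using fn[OF that, of S] fn[OF that, of S'] \<open>f S = f S'\<close> by simp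
    show "S = S'"
    proof (intro set_eqI iffI)
      fix i assume "i \<in> S" then show "i \<in> S'" using eqi \<open>S \<in> ?A\<close> by blast
    next
      fix i assume "i \<in> S'" then show "i \<in> S" using eqi \<open>S' \<in> ?A\<close> by blast
    qed
  qed
  have img: "f ` ?A \<subseteq> Lset k r"
  proof
    fix y assume "y \<in> f ` ?A"
    then obtain S where S: "S \<subseteq> {..<k}" "card S = k - r" "y = f S" by auto
    have "ones y = card {i. i < k \<and> map (\<lambda>i. i \<in> S) [0..<k] ! i}"
      unfolding ones_def S(3) f_def by (subst length_filter_conv_card) simp
    also have "{i. i < k \<and> map (\<lambda>i. i \<in> S) [0..<k] ! i} = S" using S(1) by auto
    finally show "y \<in> Lset k r" using S by (simp add: Lset_def bitstrings_def f_def)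
  qed
  show ?thesis using card_inj_on_le[OF inj img finite_L] cA by simp
qed

lemma ones_rep1: "ones (replicate a True @ replicate b False) = a"
  by (induction a) (simp_all add: ones_def)

lemma ones_rep2: "ones (replicate b False @ replicate a True) = a"
  by (induction b) (simp_all add: ones_def)

lemma aux_div:
  fixes a k K R :: real
  assumes "k \<noteq> 0" "K \<noteq> 0" "R \<noteq> 0"
  shows "a * k / (k * K / R) = a * R / K"
  using assms by (simp add: field_simps)

lemma main_bound:
  assumes r2: "2 \<le> r" and rk: "2 * r \<le> k" and kn: "k \<le> n"
  shows "measure_pmf.expectation (pmf_of_set (bitstrings k)) (pov_within k r n T)
     \<le> (4 + 6 * real r) * real r ^ r / real k ^ (r - 1)"
proof -
  define zo where "zo = optimum k r"
  define zv where "zv = valley k r"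
  let ?B = "bitstrings k"
  let ?L = "Lset k r"
  let ?h = "\<lambda>z x. hit k n z T x"
  have oL: "zo \<in> ?L" unfolding zo_def optimum_def Lset_def bitstrings_def using ones_rep1[of "k - r" r] rk by simp
  have vL: "zv \<in> ?L" unfolding zv_def valley_def Lset_def bitstrings_def using ones_rep2[of r "k - r"] rk by simp
  have oB: "zo \<in> ?B" and vB: "zv \<in> ?B" using oL vL by (auto simp: Lset_def)
  have k2: "2 \<le> k" "r \<le> k" "1 \<le> k" using r2 rk by auto
  have "real (card ?L) * SS k n T zo = (\<Sum>z\<in>?L. SS k n T z)"
    using SS_sym[OF _ oL] by simp
  also have "\<dots> = (\<Sum>x\<in>?B. \<Sum>z\<in>?L. if x \<noteq> z then ?h z x else 0)"
    unfolding SS_def by (rule sum.swap)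
  also have "\<dots> = (\<Sum>x\<in>?B. \<Sum>z\<in>?L - {x}. ?h z x)"
    by (intro sum.cong refl sum_ne finite_L)
  also have "\<dots> \<le> (\<Sum>x\<in>?B. 1 + 3 * real k * real r)"
  proof (rule sum_mono)
    fix x assume "x \<in> ?B"
    then have lx: "length x = k" by (simp add: bitstrings_def)
    show "(\<Sum>z\<in>?L - {x}. ?h z x) \<le> 1 + 3 * real k * real r"
      using hit_cnt[OF lx, where r=r and n=n and T=T] cnt_bound[OF k2(1) kn k2(2) lx, of T] gp_le[OF k2(2), of "ones x"]
      by linarith
  qed
  also have "\<dots> = 2 ^ k * (1 + 3 * real k * real r)" by (simp add: card_bs)
  finally have cnt_ineq: "real (card ?L) * SS k n T zo \<le> 2 ^ k * (1 + 3 * real k * real r)" .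
  have "(\<Sum>x\<in>?B. pov_within k r n T x) \<le>
     (\<Sum>x\<in>?B. (if x = zo then 1 else 0) + (if x = zv then 1 else 0) +
        (if x \<noteq> zo then ?h zo x else 0) + (if x \<noteq> zv then ?h zv x else 0))"
  proof (rule sum_mono)
    fix x assume xB: "x \<in> ?B"
    show "pov_within k r n T x \<le> (if x = zo then 1 else 0) + (if x = zv then 1 else 0) +
        (if x \<noteq> zo then ?h zo x else 0) + (if x \<noteq> zv then ?h zv x else 0)"
    proof (cases "x = zo \<or> x = zv")
      case True
      then show ?thesis using pov_le1[of k r n T x] hit_nonneg[of k n zo T x] hit_nonneg[of k n zv T x]
        by auto
    next
      case False
      then show ?thesis using povA[of x k r n T] xB by (auto simp: bitstrings_def zo_def zv_def)
    qed
  qed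
  also have "\<dots> = 1 + 1 + SS k n T zo + SS k n T zv"
    using oB vB finite_bs[of k] by (simp add: sum.distrib SS_def sum.delta')
  also have "SS k n T zv = SS k n T zo" using SS_sym[OF vL oL] .
  finally have sp: "(\<Sum>x\<in>?B. pov_within k r n T x) \<le> 2 + 2 * SS k n T zo" by simp
  define Cb where "Cb = real (k choose r)"
  have Cbpos: "0 < Cb" using k2 by (simp add: Cb_def)
  have CbL: "Cb \<le> real (card ?L)" using card_L[OF k2(2)] by (simp add: Cb_def)
  have Cb2: "Cb \<le> 2 ^ k" using binomial_le_pow2[of k r] unfolding Cb_def
    by (metis of_nat_le_iff of_nat_numeral of_nat_power)
  have SSnn: "0 \<le> SS k n T zo" unfolding SS_def by (intro sum_nonneg) (auto simp: hit_nonneg)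
  have "Cb * SS k n T zo \<le> 2 ^ k * (1 + 3 * real k * real r)"
    using cnt_ineq mult_right_mono[OF CbL SSnn] by linarith
  then have "SS k n T zo \<le> 2 ^ k * (1 + 3 * real k * real r) / Cb"
    using Cbpos by (simp add: field_simps)
  have E: "measure_pmf.expectation (pmf_of_set ?B) (pov_within k r n T) = (\<Sum>x\<in>?B. pov_within k r n T x) / 2 ^ k"
    using finite_bs[of k] oB by (subst integral_pmf_of_set) (auto simp: card_bs)
  have "(\<Sum>x\<in>?B. pov_within k r n T x) / 2 ^ k \<le> (2 + 2 * SS k n T zo) / 2 ^ k"
    using sp by (simp add: divide_right_mono)
  also have "\<dots> = 2 / 2 ^ k + 2 * (SS k n T zo / 2 ^ k)" by (simp add: add_divide_distrib)
  also have "\<dots> \<le> 2 / Cb + 2 * ((1 + 3 * real k * real r) / Cb)"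
  proof (intro add_mono mult_left_mono)
    show "2 / 2 ^ k \<le> 2 / Cb" using Cbpos Cb2 by (intro divide_left_mono) auto
    show "SS k n T zo / 2 ^ k \<le> (1 + 3 * real k * real r) / Cb"
      using \<open>SS k n T zo \<le> 2 ^ k * (1 + 3 * real k * real r) / Cb\<close> Cbpos
      by (simp add: field_simps)
  qed auto
  also have "\<dots> = (4 + 6 * real k * real r) / Cb" by (simp add: add_divide_distrib[symmetric])
  also have "\<dots> \<le> (4 + 6 * real r) * real k / Cb"
  proof (rule divide_right_mono)
    have "(4 + 6 * real r) * real k = 4 * real k + 6 * real k * real r" by (simp add: algebra_simps)
    then show "4 + 6 * real k * real r \<le> (4 + 6 * real r) * real k" using k2 by linarith
  qed (use Cbpos in simp)
  also have "\<dots> \<le> (4 + 6 * real r) * real k / (real k ^ r / real r ^ r)"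
  proof (rule divide_left_mono)
    have "(real k / real r) ^ r \<le> Cb" unfolding Cb_def by (rule binomial_ge_n_over_k_pow_k[OF k2(2)])
    then show "real k ^ r / real r ^ r \<le> Cb" by (simp add: power_divide)
    show "0 \<le> (4 + 6 * real r) * real k" by simp
    show "0 < Cb * (real k ^ r / real r ^ r)" using Cbpos k2 r2 by simp
  qed
  also have "\<dots> = (4 + 6 * real r) * real r ^ r / real k ^ (r - 1)"
  proof -
    obtain m where m: "r = Suc m" using r2 by (cases r) auto
    have "real k ^ r = real k * real k ^ (r - 1)" using m by simp
    show ?thesis unfolding \<open>real k ^ r = real k * real k ^ (r - 1)\<close> by (rule aux_div) (use k2 r2 in auto)
  qed
  finally show ?thesis using E by simp
qed



theorem lemma4:
  fixes r :: nat
  assumes "r \<ge> 2"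
  shows "\<exists>C>0. \<forall>k n. 2 * r \<le> k \<and> k \<le> n \<longrightarrow> p_ov k r n \<le> C / real k ^ (r - 1)"
proof (intro exI conjI allI impI)
  show "0 < (4 + 6 * real r) * real r ^ r" using assms by simp
  fix k n assume kn: "2 * r \<le> k \<and> k \<le> n"
  show "p_ov k r n \<le> (4 + 6 * real r) * real r ^ r / real k ^ (r - 1)"
    unfolding p_ov_def
    by (rule cSUP_least) (use main_bound[OF assms] kn in auto)
qed

end
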